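(* Let $q$ be a prime power with $q\equiv 3\pmod 4$, let $s\in\mathbb{N}$ be even, let $b\in\mathbb{F}_q^*$, and let $f(x)=x^s\left(x^{(q-1)/2}+b\right)\in\mathbb{F}_q[x]$. If $f$ is a permutation polynomial of $\mathbb{F}_q$, then $\delta_f\le 4s-3$.
   Context: A polynomial $f\in\mathbb{F}_q[x]$ is a permutation polynomial of $\mathbb{F}_q$ if $c\mapsto f(c)$ is a bijection of $\mathbb{F}_q$. For $a\in\mathbb{F}_q^*$, $\Delta_{f,a}(x)=f(x+a)-f(x)$, and the differential uniformity is $\delta_f=\max_{a\in\mathbb{F}_q^*,\,c\in\mathbb{F}_q}|\{x\in\mathbb{F}_q:\Delta_{f,a}(x)=c\}|$. *)

theory Defs
  imports "HOL-Computational_Algebra.Polynomial" "HOL-Library.Cardinality"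
begin

text \<open>Finite field F_q is modelled as a type 'a of class finite and field, q = CARD('a).\<close>

definition permutation_polynomial :: "'a::{finite,field} poly \<Rightarrow> bool" where
  "permutation_polynomial f \<longleftrightarrow> bij (poly f)"

definition diff_uniformity :: "'a::{finite,field} poly \<Rightarrow> nat" where
  "diff_uniformity f =
     Max {card {x. poly f (x + a) - poly f x = c} | a c. a \<noteq> 0}"

end

theory Submission
  imports Defs
begin


lemma card_char0: "of_nat CARD('a::{finite,field}) = (0::'a)"
proof -
  have b: "bij_betw (\<lambda>x::'a. x + 1) UNIV UNIV"
    by (rule bij_betw_byWitness[where f'="\<lambda>x. x - 1"]) auto
  have "(\<Sum>x\<in>UNIV. x + 1) = (\<Sum>x\<in>(UNIV::'a set). x)"
    using sum.reindex_bij_betw[OF b, of "\<lambda>x. x"] by simp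
  moreover have "(\<Sum>x\<in>UNIV. x + 1) = (\<Sum>x\<in>(UNIV::'a set). x) + of_nat CARD('a)"
    by (simp add: sum.distrib)
  ultimately show ?thesis by simp
qed

lemma two_ne0:
  assumes "CARD('a::{finite,field}) mod 4 = 3"
  shows "(2::'a) \<noteq> 0"
proof
  assume h: "(2::'a) = 0"
  have "\<exists>k. CARD('a) = 2 * (2*k+1) + 1" using assms by presburger
  then obtain k where k: "CARD('a) = 2 * (2*k+1) + 1" by blast
  have "(0::'a) = of_nat (2 * (2*k+1) + 1)" using card_char0[where 'a='a] k by simp
  also have "\<dots> = 2 * of_nat (2*k+1) + 1" by simp
  also have "\<dots> = 1" using h by simp
  finally show False by simp
qed

lemma fermat:
  fixes x :: "'a::{finite,field}"
  assumes "x \<noteq> 0"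
  shows "x ^ (CARD('a) - 1) = 1"
proof -
  let ?N = "UNIV - {0::'a}"
  have b: "bij_betw (\<lambda>y. x * y) ?N ?N"
    by (rule bij_betw_byWitness[where f'="\<lambda>y. y / x"]) (use assms in auto)
  have "(\<Prod>y\<in>?N. x * y) = (\<Prod>y\<in>?N. y)"
    using prod.reindex_bij_betw[OF b, of "\<lambda>y. y"] by simp
  moreover have "(\<Prod>y\<in>?N. x * y) = x ^ card ?N * (\<Prod>y\<in>?N. y)"
    by (simp add: prod.distrib)
  moreover have "(\<Prod>y\<in>?N. y) \<noteq> 0" by simp
  moreover have "card ?N = CARD('a) - 1" by (simp add: card_Diff_subset)
  ultimately show ?thesis by simp
qed



lemma eta_pm:
  fixes x :: "'a::{finite,field}"
  assumes "CARD('a) mod 4 = 3" "x \<noteq> 0"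
  shows "x ^ ((CARD('a) - 1) div 2) = 1 \<or> x ^ ((CARD('a) - 1) div 2) = -1"
proof -
  have e: "2 * ((CARD('a) - 1) div 2) = CARD('a) - 1" using assms(1) by presburger
  have "(x ^ ((CARD('a) - 1) div 2))^2 = 1"
    using fermat[OF assms(2)] by (metis e power_mult mult.commute)
  thus ?thesis by (simp add: power2_eq_1_iff)
qed

lemma eta_m1:
  assumes "CARD('a::{finite,field}) mod 4 = 3"
  shows "(-1::'a) ^ ((CARD('a) - 1) div 2) = -1"
proof -
  have "odd ((CARD('a) - 1) div 2)" using assms by presburger
  thus ?thesis by simp
qed

lemma h_pos:
  assumes "CARD('a::{finite,field}) mod 4 = 3"
  shows "(CARD('a) - 1) div 2 > 0"
  using assms by presburger

lemma roots_prod_factor: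
  fixes P :: "'a::field poly"
  assumes "finite A" "\<forall>r\<in>A. poly P r = 0"
  shows "\<exists>R. P = (\<Prod>r\<in>A. [:-r,1:]) * R"
  using assms
proof (induction A rule: finite_induct)
  case empty
  then show ?case by auto
next
  case (insert x F)
  then obtain R where R: "P = (\<Prod>r\<in>F. [:-r,1:]) * R" by auto
  have "poly (\<Prod>r\<in>F. [:-r,1:]) x \<noteq> 0"
    using insert.hyps by (auto simp: poly_prod)
  moreover have "poly P x = 0" using insert.prems by auto
  ultimately have "poly R x = 0" using R by simp
  then obtain R' where R': "R = [:-x,1:] * R'" using poly_eq_0_iff_dvd by (metis dvdE)
  have "P = ([:-x,1:] * (\<Prod>r\<in>F. [:-r,1:])) * R'"
    unfolding R R' by (simp only: mult_ac)
  also have "[:-x,1:] * (\<Prod>r\<in>F. [:-r,1:]) = (\<Prod>r\<in>insert x F. [:-r,1:])"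
    by (rule prod.insert[symmetric]) (use insert.hyps in auto)
  finally have "P = (\<Prod>r\<in>insert x F. [:-r,1:]) * R'" .
  then show ?case by blast
qed

lemma roots_factor_full:
  fixes P :: "'a::field poly"
  assumes "P \<noteq> 0" "finite A" "\<forall>r\<in>A. poly P r = 0"
  shows "card A \<le> degree P"
    and "card A = degree P \<Longrightarrow> poly P z = (\<Prod>r\<in>A. (z - r)) * lead_coeff P"
proof -
  obtain R where R: "P = (\<Prod>r\<in>A. [:-r,1:]) * R" using roots_prod_factor[OF assms(2,3)] by blast
  have Q0: "(\<Prod>r\<in>A. [:-r,1:]) \<noteq> (0::'a poly)" using assms(2) by simp
  have R0: "R \<noteq> 0" using R assms(1) by auto
  have dQ: "degree (\<Prod>r\<in>A. [:-r,(1::'a):]) = card A"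
    by (subst degree_prod_eq_sum_degree) auto
  have lQ: "lead_coeff (\<Prod>r\<in>A. [:-r,(1::'a):]) = 1"
    by (simp add: lead_coeff_prod)
  have dP: "degree P = card A + degree R" using R Q0 R0 dQ by (simp add: degree_mult_eq)
  then show "card A \<le> degree P" by simp
  assume "card A = degree P"
  then have "degree R = 0" using dP by simp
  then obtain l where l: "R = [:l:]" using degree0_coeffs by blast
  have "lead_coeff P = l" unfolding R l lead_coeff_mult lQ by simp
  moreover have "poly P z = (\<Prod>r\<in>A. (z - r)) * l"
    unfolding R l by (simp add: poly_prod)
  ultimately show "poly P z = (\<Prod>r\<in>A. (z - r)) * lead_coeff P" by simp
qed



lemma sum_bb: "(\<Sum>p\<in>(UNIV::(bool\<times>bool) set). g p) = g (True,True) + g (True,False) + g (False,True) + g (False,False)"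
proof -
  have U: "(UNIV::(bool\<times>bool) set) = {(True,True),(True,False),(False,True),(False,False)}"
    by (auto simp: UNIV_bool)
  show ?thesis unfolding U by (simp add: add.assoc)
qed

lemma prod_pow_const:
  fixes f :: "'b \<Rightarrow> 'a::comm_semiring_1"
  assumes "\<forall>r\<in>A. f r ^ h = k"
  shows "(\<Prod>r\<in>A. f r) ^ h = k ^ card A"
proof -
  have "(\<Prod>r\<in>A. f r) ^ h = (\<Prod>r\<in>A. f r ^ h)" by (rule prod_power_distrib)
  also have "\<dots> = (\<Prod>r\<in>A. k)" by (rule prod.cong) (use assms in auto)
  finally show ?thesis by simp
qed

lemma nz_helper:
  fixes b :: "'a::field"
  assumes two: "(2::'a) \<noteq> 0" and "b \<noteq> 0" "b \<noteq> 1" "b \<noteq> -1"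
  shows "2*b+1+1 \<noteq> 0" "2*b + -1 + -1 \<noteq> 0" "2*b+1+-1 \<noteq> 0" "2*b + -1 + 1 \<noteq> 0"
proof -
  have p1: "b + 1 \<noteq> 0"
  proof
    assume "b + 1 = 0"
    then have "b = -1" by (simp add: eq_neg_iff_add_eq_0)
    with assms(4) show False by contradiction
  qed
  have m1: "b - 1 \<noteq> 0" using assms(3) by simp
  have "2*b+1+1 = 2*(b+1)" by (simp add: algebra_simps)
  also have "\<dots> \<noteq> 0" using two p1 mult_eq_0_iff by blast
  finally show "2*b+1+1 \<noteq> 0" .
  have "2*b + -1 + -1 = 2*(b-1)" by (simp add: algebra_simps)
  also have "\<dots> \<noteq> 0" using two m1 mult_eq_0_iff by blast
  finally show "2*b + -1 + -1 \<noteq> 0" .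
  have "2*b \<noteq> 0" using two assms(2) mult_eq_0_iff by blast
  then show "2*b+1+-1 \<noteq> 0" "2*b + -1 + 1 \<noteq> 0" by simp_all
qed

lemma main_count:
  fixes a b c :: "'a::{finite,field}" and s :: nat
  assumes q: "CARD('a) mod 4 = 3" and se: "even s" and sp: "s > 0" and b0: "b \<noteq> 0"
    and b1: "b \<noteq> 1" and bm: "b \<noteq> -1" and a0: "a \<noteq> 0"
  defines "h \<equiv> (CARD('a) - 1) div 2"
  shows "card {x. (x+a)^s * ((x+a)^h + b) - x^s * (x^h + b) = c} \<le> 4*s - 3"
proof -
  define S where "S = {x. (x+a)^s * ((x+a)^h + b) - x^s * (x^h + b) = c}"
  define e :: "bool \<Rightarrow> 'a" where "e t = (if t then 1 else -1)" for t
  define P where "P p = smult (b + e (fst p)) ([:a,1:]^s) - smult (b + e (snd p)) (monom 1 s) - [:c:]" for p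
  define J where "J p = {x\<in>S. (x+a = 0 \<or> (x+a)^h = e (fst p)) \<and> (x = 0 \<or> x^h = e (snd p))}" for p
  define B where "B p = (if fst p = snd p then s - 1 else s)" for p :: "bool\<times>bool"
  have two: "(2::'a) \<noteq> 0" using two_ne0[OF q] .
  have hp: "h > 0" unfolding h_def using h_pos[OF q] .
  have eta: "\<And>x::'a. x \<noteq> 0 \<Longrightarrow> x^h = 1 \<or> x^h = -1" unfolding h_def using eta_pm[OF q] by blast
  have etam1: "(-1::'a)^h = -1" unfolding h_def using eta_m1[OF q] .
  have e1: "1 \<noteq> (-1::'a)"
  proof
    assume h1: "1 = (-1::'a)"
    have "(2::'a) = 1 + 1" by simp
    also have "\<dots> = 1 + (-1)" by (subst h1[symmetric]) (rule refl)
    also have "\<dots> = 0" by simp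
    finally show False using two by simp
  qed
  have polyP: "\<And>p x. poly (P p) x = (b + e (fst p))*(x+a)^s - (b + e (snd p)) * x^s - c"
    by (simp add: P_def poly_monom add.commute)
  have roots: "\<And>p x. x \<in> J p \<Longrightarrow> poly (P p) x = 0"
  proof -
    fix p x assume x: "x \<in> J p"
    have A: "(x+a)^s * ((x+a)^h + b) = (b + e (fst p))*(x+a)^s"
      using x sp by (cases "x + a = 0") (auto simp: J_def)
    have B: "x^s * (x^h + b) = (b + e (snd p))*x^s"
      using x sp by (cases "x = 0") (auto simp: J_def)
    have cx: "(x+a)^s * ((x+a)^h + b) - x^s * (x^h + b) = c" using x by (simp add: J_def S_def)
    have "(b + e (fst p))*(x+a)^s - (b + e (snd p))*x^s = c" using cx unfolding A B .
    then show "poly (P p) x = 0" by (simp add: polyP)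
  qed
  have as0: "a^s \<noteq> 0" using a0 by simp
  have Pne: "\<And>p. P p \<noteq> 0"
  proof
    fix p assume "P p = 0"
    then have "poly (P p) 0 - poly (P p) (-a) = 0" by simp
    moreover have "poly (P p) 0 - poly (P p) (-a) = (2*b + e (fst p) + e (snd p)) * a^s"
      using sp se by (simp add: polyP algebra_simps zero_power[OF sp])
    moreover have "2*b + e (fst p) + e (snd p) \<noteq> 0"
      using nz_helper[OF two b0 b1 bm] by (cases "fst p"; cases "snd p") (simp_all add: e_def)
    ultimately show False using as0 by simp
  qed
  have cc: "coeff [:c:] s = 0" using sp by (cases s) auto
  have coeffP: "\<And>p. coeff (P p) s = e (fst p) - e (snd p)"
    using cc by (simp add: P_def coeff_linear_power)
  have degP0: "\<And>p. degree (P p) \<le> s"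
    unfolding P_def
    by (intro degree_diff_le degree_smult_le[THEN order_trans])
       (auto simp: degree_linear_power degree_monom_le)
  have degP: "\<And>p. degree (P p) \<le> B p"
  proof -
    fix p
    show "degree (P p) \<le> B p"
    proof (cases "fst p = snd p")
      case True
      then have "coeff (P p) s = 0" using coeffP by simp
      then have "degree (P p) \<noteq> s"
      proof -
        assume c0: "coeff (P p) s = 0"
        show "degree (P p) \<noteq> s"
        proof
          assume "degree (P p) = s"
          then have "lead_coeff (P p) = 0" using c0 by simp
          then show False using Pne[of p] by simp
        qed
      qed
      then show ?thesis using degP0[of p] True by (simp add: B_def)
    next
      case False
      then show ?thesis using degP0[of p] by (simp add: B_def)
    qed
  qed
  have finJ: "\<And>p. finite (J p)" by simp
  have cardJ: "\<And>p. card (J p) \<le> degree (P p)"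
    using roots_factor_full(1)[OF Pne finJ] roots by blast
  have JS: "\<And>p. J p \<subseteq> S" by (auto simp: J_def)
  have w: "\<And>x. x \<in> S \<Longrightarrow> 1 + of_bool (x = 0 \<or> x = -a) \<le> (\<Sum>p\<in>UNIV. of_bool (x \<in> J p) :: nat)"
  proof -
    fix x assume xS: "x \<in> S"
    show "1 + of_bool (x = 0 \<or> x = -a) \<le> (\<Sum>p\<in>UNIV. of_bool (x \<in> J p) :: nat)"
    proof (cases "x = 0")
      case True
      then have "x + a \<noteq> 0" using a0 by simp
      then show ?thesis using eta[of "x+a"] xS True e1 by (auto simp: sum_bb J_def e_def)
    next
      case False
      note x0 = False
      show ?thesis
      proof (cases "x + a = 0")
        case True
        then have "x = -a" by (simp add: add_eq_0_iff)
        then show ?thesis using eta[of x] xS True x0 e1 by (auto simp: sum_bb J_def e_def)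
      next
        case False
        have "x \<noteq> -a" using False by auto
        then show ?thesis using eta[of x] eta[of "x+a"] xS False x0 e1 by (auto simp: sum_bb J_def e_def)
      qed
    qed
  qed
  have "(\<Sum>x\<in>S. 1 + of_bool (x = 0 \<or> x = -a) :: nat) = (\<Sum>x\<in>S. 1) + (\<Sum>x\<in>S. of_bool (x = 0 \<or> x = -a))"
    by (rule sum.distrib)
  also have "\<dots> = card S + card (S \<inter> {x. x = 0 \<or> x = -a})"
  proof -
    have fS: "finite S" by simp
    show ?thesis
      by (simp only: card_eq_sum[symmetric] sum_of_bool_eq[of S "\<lambda>x. x = 0 \<or> x = -a", OF fS fS] of_nat_id)
  qed
  finally have "card S + card (S \<inter> {x. x = 0 \<or> x = -a}) = (\<Sum>x\<in>S. 1 + of_bool (x = 0 \<or> x = -a) :: nat)"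
    by simp
  also have "\<dots> \<le> (\<Sum>x\<in>S. \<Sum>p\<in>UNIV. of_bool (x \<in> J p) :: nat)"
    by (rule sum_mono) (rule w)
  also have "\<dots> = (\<Sum>p\<in>UNIV. \<Sum>x\<in>S. of_bool (x \<in> J p) :: nat)"
    by (rule sum.swap)
  also have "\<dots> = (\<Sum>p\<in>UNIV. card (J p))"
  proof (rule sum.cong)
    fix p
    have "S \<inter> {x. x \<in> J p} = J p" using JS[of p] by blast
    then show "(\<Sum>x\<in>S. of_bool (x \<in> J p) :: nat) = card (J p)"
      by (simp add: sum_of_bool_eq)
  qed simp
  finally have main: "card S + card (S \<inter> {x. x = 0 \<or> x = -a}) \<le> (\<Sum>p\<in>UNIV. card (J p))" .
  have s2: "s \<ge> 2" using se sp by presburger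
  let ?TT = "(True,True)" and ?TF = "(True,False)" and ?FT = "(False,True)" and ?FF = "(False,False)"
  have bounds: "card (J ?TT) \<le> degree (P ?TT)" "degree (P ?TT) \<le> s - 1"
    "card (J ?TF) \<le> degree (P ?TF)" "degree (P ?TF) \<le> s"
    "card (J ?FT) \<le> degree (P ?FT)" "degree (P ?FT) \<le> s"
    "card (J ?FF) \<le> degree (P ?FF)" "degree (P ?FF) \<le> s - 1"
    using cardJ degP[of ?TT] degP[of ?TF] degP[of ?FT] degP[of ?FF] by (simp_all add: B_def)
  show ?thesis
  proof (rule ccontr)
    assume "\<not> ?thesis"
    then have big: "card S \<ge> 4*s - 2" unfolding S_def by simp
    have m2: "card S + card (S \<inter> {x. x = 0 \<or> x = -a}) \<le> 4*s - 2"
      using main bounds s2 by (simp add: sum_bb)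
    then have "card (S \<inter> {x. x = 0 \<or> x = -a}) = 0" using big by linarith
    then have bd: "\<And>x. x \<in> S \<Longrightarrow> x \<noteq> 0 \<and> x + a \<noteq> 0"
      by (auto simp: add_eq_0_iff)
    have full: "card (J ?TT) = degree (P ?TT)" "card (J ?TF) = degree (P ?TF)"
      "card (J ?FT) = degree (P ?FT)" "degree (P ?TF) = s" "degree (P ?FT) = s"
      using main bounds s2 big by (simp_all add: sum_bb)
    have Jin: "\<And>p x. x \<in> J p \<Longrightarrow> x \<noteq> 0 \<and> x + a \<noteq> 0 \<and> (x+a)^h = e (fst p) \<and> x^h = e (snd p)"
      using bd JS unfolding J_def by blast
    have lTF: "lead_coeff (P ?TF) = 2" using full(4) coeffP[of ?TF] by (simp add: e_def)
    have "poly (P ?TF) 0 = (\<Prod>r\<in>J ?TF. (0 - r)) * 2"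
      using roots_factor_full(2)[OF Pne finJ _ full(2)] roots lTF by auto
    moreover have "(\<Prod>r\<in>J ?TF. (0 - r)) ^ h = 1"
    proof -
      have "\<forall>r\<in>J ?TF. (0 - r)^h = 1"
        using Jin etam1 by (auto simp: power_minus' e_def)
      then show ?thesis using prod_pow_const[of "J ?TF" "\<lambda>r. 0 - r" h 1] by simp
    qed
    moreover have "poly (P ?TF) 0 = (b+1)*a^s - c" using sp by (simp add: polyP e_def zero_power[OF sp] algebra_simps)
    ultimately have eq1: "((b+1)*a^s - c)^h = 2^h" by (simp add: power_mult_distrib)
    have lFT: "lead_coeff (P ?FT) = -2" using full(5) coeffP[of ?FT] by (simp add: e_def)
    have "poly (P ?FT) (-a) = (\<Prod>r\<in>J ?FT. (-a - r)) * (-2)"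
      using roots_factor_full(2)[OF Pne finJ _ full(3)] roots lFT by auto
    moreover have "(\<Prod>r\<in>J ?FT. (-a - r)) ^ h = 1"
    proof -
      have "\<forall>r\<in>J ?FT. (-a - r)^h = 1"
      proof
        fix r assume r: "r \<in> J ?FT"
        have "(-a - r)^h = (-(r+a))^h" by (simp add: algebra_simps)
        also have "\<dots> = (-1)^h * (r+a)^h" by (rule power_minus)
        finally have "(-a - r)^h = (-1)^h * (r+a)^h" .
        then show "(-a - r)^h = 1" using Jin[OF r] etam1 by (simp add: e_def)
      qed
      then show ?thesis using prod_pow_const[of "J ?FT" "\<lambda>r. -a - r" h 1] by simp
    qed
    moreover have "poly (P ?FT) (-a) = -(b+1)*a^s - c" using sp se by (simp add: polyP e_def zero_power[OF sp] algebra_simps)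
    ultimately have eq2: "(-(b+1)*a^s - c)^h = (-2)^h" by (simp only: power_mult_distrib) simp
    have z1: "poly (P ?TT) 0 = (\<Prod>r\<in>J ?TT. (0 - r)) * lead_coeff (P ?TT)"
      using roots_factor_full(2)[OF Pne finJ _ full(1)] roots by auto
    have z2: "poly (P ?TT) (-a) = (\<Prod>r\<in>J ?TT. (-a - r)) * lead_coeff (P ?TT)"
      using roots_factor_full(2)[OF Pne finJ _ full(1)] roots by auto
    have "(\<Prod>r\<in>J ?TT. (0 - r)) ^ h = (-1) ^ card (J ?TT)"
    proof -
      have "\<forall>r\<in>J ?TT. (0 - r)^h = -1"
        using Jin etam1 by (auto simp: power_minus' e_def)
      then show ?thesis using prod_pow_const[of "J ?TT" "\<lambda>r. 0 - r" h "-1"] by simp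
    qed
    moreover have "(\<Prod>r\<in>J ?TT. (-a - r)) ^ h = (-1) ^ card (J ?TT)"
    proof -
      have "\<forall>r\<in>J ?TT. (-a - r)^h = -1"
      proof
        fix r assume r: "r \<in> J ?TT"
        have "(-a - r)^h = (-(r+a))^h" by (simp add: algebra_simps)
        also have "\<dots> = (-1)^h * (r+a)^h" by (rule power_minus)
        finally have "(-a - r)^h = (-1)^h * (r+a)^h" .
        then show "(-a - r)^h = -1" using Jin[OF r] etam1 by (simp add: e_def)
      qed
      then show ?thesis using prod_pow_const[of "J ?TT" "\<lambda>r. -a - r" h "-1"] by simp
    qed
    ultimately have "(poly (P ?TT) 0)^h = (poly (P ?TT) (-a))^h"
      using z1 z2 by (simp add: power_mult_distrib)
    moreover have "poly (P ?TT) 0 = (b+1)*a^s - c" using sp by (simp add: polyP e_def zero_power[OF sp] algebra_simps)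
    moreover have "poly (P ?TT) (-a) = -(b+1)*a^s - c" using sp se by (simp add: polyP e_def zero_power[OF sp] algebra_simps)
    ultimately have "((b+1)*a^s - c)^h = (-(b+1)*a^s - c)^h" by simp
    then have "(2::'a)^h = (-2)^h" using eq1 eq2 by simp
    also have "(-2::'a)^h = - (2^h)" using etam1 by (simp add: power_minus')
    finally have "2 * (2::'a)^h = 0" by simp
    then show False using two by simp
  qed
qed



theorem theorem1p2:
  fixes b :: "'a::{finite,field}" and s :: nat
  assumes "CARD('a) mod 4 = 3"
    and "even s" and "s > 0"
    and "b \<noteq> 0"
    and "permutation_polynomial
           (monom 1 s * (monom 1 ((CARD('a) - 1) div 2) + [:b:]))"
  shows "int (diff_uniformity
           (monom 1 s * (monom 1 ((CARD('a) - 1) div 2) + [:b:]))) \<le> 4 * int s - 3"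
proof -
  define h where "h = (CARD('a) - 1) div 2"
  define f where "f = monom 1 s * (monom 1 ((CARD('a) - 1) div 2) + [:b:])"
  have pf: "\<And>x. poly f x = x^s * (x^h + b)" by (simp add: f_def poly_monom h_def)
  have inj: "inj (poly f)" using assms(5) unfolding permutation_polynomial_def f_def
    by (rule bij_is_inj)
  have hp: "h > 0" unfolding h_def using h_pos[OF assms(1)] .
  have etam1: "(-1::'a)^h = -1" unfolding h_def using eta_m1[OF assms(1)] .
  have f0: "poly f 0 = 0" using assms(3) by (simp add: pf)
  have bm: "b \<noteq> -1"
  proof
    assume "b = -1"
    then have "poly f 1 = 0" by (simp add: pf)
    then have "poly f 1 = poly f 0" using f0 by simp
    then have "(1::'a) = 0" by (rule injD[OF inj])
    then show False by simp
  qed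
  have b1: "b \<noteq> 1"
  proof
    assume "b = 1"
    then have "poly f (-1) = 0" using assms(2) etam1 by (simp add: pf)
    then have "poly f (-1) = poly f 0" using f0 by simp
    then have "(-1::'a) = 0" by (rule injD[OF inj])
    then show False by simp
  qed
  define M where "M = {card {x. poly f (x + a) - poly f x = c} | a c. a \<noteq> 0}"
  have bnd: "\<forall>m\<in>M. m \<le> 4*s - 3"
  proof
    fix m assume "m \<in> M"
    then obtain a c where a: "a \<noteq> 0" and m: "m = card {x. poly f (x + a) - poly f x = c}"
      unfolding M_def by blast
    show "m \<le> 4*s - 3" unfolding m pf h_def
      using main_count[OF assms(1,2,3,4) b1 bm a] .
  qed
  have finM: "finite M"
  proof (rule finite_subset)
    show "M \<subseteq> {..CARD('a)}" unfolding M_def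
      by (auto intro: card_mono)
  qed simp
  have neM: "M \<noteq> {}" unfolding M_def by (rule ex_in_conv[THEN iffD1], rule exI[of _ "card {x. poly f (x + 1) - poly f x = 0}"], rule CollectI, rule exI[of _ 1], rule exI[of _ 0]) simp
  have "Max M \<le> 4*s - 3" using finM neM bnd by simp
  moreover have "diff_uniformity f = Max M" unfolding diff_uniformity_def M_def ..
  ultimately have "diff_uniformity f \<le> 4*s - 3" by simp
  moreover have "int (4*s - 3) = 4 * int s - 3" using assms(3) by simp
  ultimately show ?thesis unfolding f_def by linarith
qed

end
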